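(* Let $n$ be a positive integer and let $A(n)=(a_{ij})$, $p=p(n)$, $pp=pp(n)$, $b(n)$, $l_{max}$ be as in the context. Let $m\ge 1$ be an integer such that $\overline{p}=pm$ satisfies $\lfloor \overline{p}/2\rfloor> b(n)$ and $\overline{p}\ge 2\,l_{max}$, put $r=\lfloor\overline{p}/2\rfloor$, let $v$ be an integer with $v\ge pp+\overline{p}$, and let $B=(b_{ij})_{1\le i,j\le\overline{p}}$ be the $\overline{p}\times\overline{p}$ matrix with $b_{ij}=a_{v+i,v+j}$ if $i-r\le j\le i+r$; $b_{ij}=a_{v+i,v+j-\overline{p}}$ if $j>i+r$; $b_{ij}=a_{v+i,v+j+\overline{p}}$ if $j<i-r$. Consider the incidence structure whose points are the columns of $B$ and whose lines are the rows of $B$, where column $i$ is incident with row $j$ iff $b_{ji}=1$. Then any two distinct lines are incident with at most one common point; equivalently, there are no indices $1\le i<j\le\overline{p}$, $1\le k<l\le\overline{p}$ with $b_{ik}=b_{il}=b_{jk}=b_{jl}=1$.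
   Context: $\mathbb{N}=\{1,2,3,\dots\}$. Fix a positive integer $n$. The infinite $\{0,1\}$-matrix $A(n)=(a_{ij})_{i,j\in\mathbb{N}}$ is defined recursively. Its entries are determined row by row (row $1$ first), and within each row from left to right, so that $a_{kl}$ is determined after all $a_{ij}$ with $i<k$ and all $a_{kj}$ with $j<l$. One sets $a_{kl}=1$ if and only if all of the following hold: (1) $\sum_{j<l}a_{kj}<n+1$; (2) $\sum_{i<k}a_{il}<n+1$; (3) there is no pair $(i,j)$ with $1\le i<k$, $1\le j<l$ and $a_{ij}=a_{il}=a_{kj}=1$. Otherwise $a_{kl}=0$. The matrix $A(n)$ is eventually periodic along the diagonal: there exist $c\ge0$, $q\ge1$ with $a_{i+q,j+q}=a_{ij}$ for all $i>c$, $j\ge1$. The period $p=p(n)$ is the smallest $q\ge1$ for which such a $c$ exists, and the preperiod $pp=pp(n)$ is the smallest $c\ge 0$ with $a_{i+p,j+p}=a_{ij}$ for all $i>c$, $j\ge 1$. Define $b(n)=\max\{|j-i| : i,j\ge1,\ a_{ij}=1,\ i>pp(n)\}$. The length of a row $k$ of $A(n)$ (which contains finitely many and at least one ones) is $l-f+1$, where $f$ and $l$ are the smallest and largest $j$ with $a_{kj}=1$; $l_{max}$ is the maximum length of a row $k$ of $A(n)$ with $k>pp(n)$. *)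

theory Defs
  imports Main
begin

text \<open>Entries of A(n) are represented as booleans (True = 1, False = 0);
rows and columns are indexed by positive naturals (index 0 is unused, always False).\<close>

text \<open>Condition for setting entry (k,l) to 1, given the matrix P of the previous rows
(rows 1..k-1) and the already determined entries cur j (j < l) of row k.\<close>
definition entry_cond :: "nat \<Rightarrow> (nat \<Rightarrow> nat \<Rightarrow> bool) \<Rightarrow> (nat \<Rightarrow> bool) \<Rightarrow> nat \<Rightarrow> nat \<Rightarrow> bool" where
  "entry_cond n P cur k l \<longleftrightarrow>
     card {j. 1 \<le> j \<and> j < l \<and> cur j} < n + 1 \<and>
     card {i. 1 \<le> i \<and> i < k \<and> P i l} < n + 1 \<and>
     \<not> (\<exists>i j. 1 \<le> i \<and> i < k \<and> 1 \<le> j \<and> j < l \<and> P i j \<and> P i l \<and> cur j)"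

primrec newrow :: "nat \<Rightarrow> (nat \<Rightarrow> nat \<Rightarrow> bool) \<Rightarrow> nat \<Rightarrow> nat \<Rightarrow> nat \<Rightarrow> bool" where
  "newrow n P k 0 = (\<lambda>j. False)"
| "newrow n P k (Suc l) = (newrow n P k l)(Suc l := entry_cond n P (newrow n P k l) k (Suc l))"

primrec rows_upto :: "nat \<Rightarrow> nat \<Rightarrow> nat \<Rightarrow> nat \<Rightarrow> bool" where
  "rows_upto n 0 = (\<lambda>i j. False)"
| "rows_upto n (Suc k) = (rows_upto n k)(Suc k := (\<lambda>j. newrow n (rows_upto n k) (Suc k) j j))"

definition A :: "nat \<Rightarrow> nat \<Rightarrow> nat \<Rightarrow> bool" where
  "A n i j = rows_upto n i i j"

definition period :: "nat \<Rightarrow> nat" where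
  "period n = (LEAST q. q \<ge> 1 \<and> (\<exists>c. \<forall>i>c. \<forall>j\<ge>1. A n (i + q) (j + q) = A n i j))"

definition preperiod :: "nat \<Rightarrow> nat" where
  "preperiod n = (LEAST c. \<forall>i>c. \<forall>j\<ge>1. A n (i + period n) (j + period n) = A n i j)"

definition bnd :: "nat \<Rightarrow> nat" where
  "bnd n = Max {nat \<bar>int j - int i\<bar> | i j. i \<ge> 1 \<and> j \<ge> 1 \<and> A n i j \<and> i > preperiod n}"

definition row_length :: "nat \<Rightarrow> nat \<Rightarrow> nat" where
  "row_length n k = Max {j. j \<ge> 1 \<and> A n k j} - Min {j. j \<ge> 1 \<and> A n k j} + 1"

definition lmax :: "nat \<Rightarrow> nat" where
  "lmax n = Max {row_length n k | k. k > preperiod n}"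

definition Bmat :: "nat \<Rightarrow> nat \<Rightarrow> nat \<Rightarrow> nat \<Rightarrow> nat \<Rightarrow> bool" where
  "Bmat n pbar v i j =
     (let r = pbar div 2 in
      if int i - int r \<le> int j \<and> int j \<le> int i + int r then A n (v + i) (v + j)
      else if int j > int i + int r then A n (v + i) (nat (int v + int j - int pbar))
      else A n (v + i) (v + j + pbar))"

end

theory Submission
  imports Defs
begin


lemma newrow_eq: "newrow n P k l j = (if 1 \<le> j \<and> j \<le> l then newrow n P k j j else False)"
proof (induction l arbitrary: j)
  case 0 then show ?case by auto
next
  case (Suc l) then show ?case by (auto simp del: newrow.simps(2) simp: newrow.simps(2)[of n P k l]) 
qed

lemma rows_upto_eq: "rows_upto n k i = (if 1 \<le> i \<and> i \<le> k then rows_upto n i i else (\<lambda>_. False))"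
proof (induction k arbitrary: i)
  case 0 then show ?case by auto
next
  case (Suc k) then show ?case by auto
qed

lemma A_0_left[simp]: "\<not> A n 0 j" by (simp add: A_def)
lemma A_0_right[simp]: "\<not> A n i 0"
  by (cases i) (auto simp: A_def newrow_eq[of _ _ _ 0])

lemma A_char:
  assumes "1 \<le> k" "1 \<le> l"
  shows "A n k l \<longleftrightarrow>
     card {j. 1 \<le> j \<and> j < l \<and> A n k j} < n + 1 \<and>
     card {i. 1 \<le> i \<and> i < k \<and> A n i l} < n + 1 \<and>
     \<not> (\<exists>i j. 1 \<le> i \<and> i < k \<and> 1 \<le> j \<and> j < l \<and> A n i j \<and> A n i l \<and> A n k j)"
proof -
  obtain k' where k: "k = Suc k'" using assms by (cases k) auto
  obtain l' where l: "l = Suc l'" using assms by (cases l) auto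
  define P where "P = rows_upto n k'"
  have Ak: "A n k j = newrow n P k j j" for j by (simp add: A_def k P_def)
  have AP: "1 \<le> i \<Longrightarrow> i < k \<Longrightarrow> P i = A n i" for i
    by (rule ext) (simp add: P_def A_def k rows_upto_eq[of n k' i])
  have Ac: "1 \<le> j \<Longrightarrow> j < l \<Longrightarrow> newrow n P k l' j = A n k j" for j
    by (simp add: Ak newrow_eq[of n P k l' j] l)
  have "A n k l = entry_cond n P (newrow n P k l') k l"
    by (simp add: Ak l)
  also have "\<dots> = (card {j. 1 \<le> j \<and> j < l \<and> A n k j} < n + 1 \<and>
     card {i. 1 \<le> i \<and> i < k \<and> A n i l} < n + 1 \<and>
     \<not> (\<exists>i j. 1 \<le> i \<and> i < k \<and> 1 \<le> j \<and> j < l \<and> A n i j \<and> A n i l \<and> A n k j))"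
  proof -
    have e1: "{j. 1 \<le> j \<and> j < l \<and> newrow n P k l' j} = {j. 1 \<le> j \<and> j < l \<and> A n k j}"
      using Ac by auto
    have e2: "{i. 1 \<le> i \<and> i < k \<and> P i l} = {i. 1 \<le> i \<and> i < k \<and> A n i l}"
      using AP by auto
    have e3: "(\<exists>i j. 1 \<le> i \<and> i < k \<and> 1 \<le> j \<and> j < l \<and> P i j \<and> P i l \<and> newrow n P k l' j)
       = (\<exists>i j. 1 \<le> i \<and> i < k \<and> 1 \<le> j \<and> j < l \<and> A n i j \<and> A n i l \<and> A n k j)"
      using AP Ac by metis
    show ?thesis unfolding entry_cond_def e1 e2 e3 by simp
  qed
  finally show ?thesis .
qed

lemma bounded_prefix:
  fixes S :: "nat set"
  assumes "\<And>l. l \<in> S \<Longrightarrow> card {j. j \<in> S \<and> j < l} \<le> N"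
  shows "finite S \<and> card S \<le> Suc N"
proof -
  have fin_le: "card T \<le> Suc N" if "T \<subseteq> S" "finite T" for T
  proof (cases "T = {}")
    case True then show ?thesis by simp
  next
    case False
    define l where "l = Max T"
    have lT: "l \<in> T" using False that(2) by (simp add: l_def)
    have sub: "T - {l} \<subseteq> {j. j \<in> S \<and> j < l}"
    proof
      fix x assume x: "x \<in> T - {l}"
      then have "x \<le> l" using Max_ge[OF that(2)] l_def by auto
      then show "x \<in> {j. j \<in> S \<and> j < l}" using x that(1) by auto
    qed
    have fin: "finite {j. j \<in> S \<and> j < l}" by (rule finite_subset[of _ "{..<l}"]) auto
    have "card (T - {l}) \<le> card {j. j \<in> S \<and> j < l}" by (rule card_mono[OF fin sub])
    also have "\<dots> \<le> N" using assms[of l] lT that(1) by auto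
    finally have "card (T - {l}) \<le> N" .
    then show ?thesis using lT that(2) by (simp add: card_Diff_singleton)
  qed
  have "finite S"
  proof (rule ccontr)
    assume "infinite S"
    then obtain T where "T \<subseteq> S" "finite T" "card T = Suc (Suc N)"
      using infinite_arbitrarily_large by blast
    then show False using fin_le[of T] by simp
  qed
  then show ?thesis using fin_le by blast
qed

context fixes n :: nat
begin

definition colc :: "nat \<Rightarrow> nat \<Rightarrow> nat" where
  "colc k c = card {i. 1 \<le> i \<and> i < k \<and> A n i c}"

definition ff :: "nat \<Rightarrow> nat" where
  "ff k = (LEAST c. 1 \<le> c \<and> colc k c < n + 1)"

definition Blk :: "nat \<Rightarrow> nat set" where
  "Blk k = {c. \<exists>j i. A n k j \<and> 1 \<le> i \<and> i < k \<and> A n i j \<and> A n i c}"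

lemma A_pos: "A n i j \<Longrightarrow> 1 \<le> i \<and> 1 \<le> j"
  by (cases i; cases j) auto

lemma row_prefix: "A n k l \<Longrightarrow> card {j. A n k j \<and> j < l} \<le> n"
proof -
  assume h: "A n k l"
  have "{j. A n k j \<and> j < l} = {j. 1 \<le> j \<and> j < l \<and> A n k j}" using A_pos by blast
  then show ?thesis using h A_char[of k l n] A_pos[OF h] by simp
qed

lemma col_prefix: "A n k l \<Longrightarrow> card {i. A n i l \<and> i < k} \<le> n"
proof -
  assume h: "A n k l"
  have "{i. A n i l \<and> i < k} = {i. 1 \<le> i \<and> i < k \<and> A n i l}" using A_pos by blast
  then show ?thesis using h A_char[of k l n] A_pos[OF h] by simp
qed

lemma row_fin: "finite {j. A n k j}" and row_le: "card {j. A n k j} \<le> n + 1"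
  using bounded_prefix[of "{j. A n k j}" n] row_prefix by auto

lemma col_fin: "finite {i. A n i c}" and col_le: "card {i. A n i c} \<le> n + 1"
  using bounded_prefix[of "{i. A n i c}" n] col_prefix by auto

lemma colc_le: "colc k c \<le> n + 1"
proof -
  have "colc k c \<le> card {i. A n i c}" unfolding colc_def
    by (rule card_mono[OF col_fin]) auto
  then show ?thesis using col_le[of c] by simp
qed

lemma colc_mono: "k \<le> k' \<Longrightarrow> colc k c \<le> colc k' c"
  unfolding colc_def by (rule card_mono) auto

lemma rows_before_fin: "finite (\<Union>i<k. {j. A n i j})"
  using row_fin by auto

lemma fresh_col: "\<exists>c. c \<ge> 1 \<and> (\<forall>i<k. \<not> A n i c) \<and> (\<forall>j\<in>X. j < c)" if "finite X"
proof -
  define U where "U = (\<Union>i<k. {j. A n i j}) \<union> X"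
  have "finite U" using rows_before_fin that by (simp add: U_def)
  define c where "c = Suc (Max (insert 0 U))"
  have "\<forall>j\<in>U. j < c" using \<open>finite U\<close> c_def by (simp add: le_imp_less_Suc)
  then show ?thesis unfolding U_def by (intro exI[of _ c]) (auto simp: c_def)
qed

lemma row_card: "1 \<le> k \<Longrightarrow> card {j. A n k j} = n + 1"
proof (rule ccontr)
  assume k: "1 \<le> k" and ne: "card {j. A n k j} \<noteq> n + 1"
  then have lt: "card {j. A n k j} < n + 1" using row_le[of k] by simp
  obtain l where l: "l \<ge> 1" "\<forall>i<k. \<not> A n i l" "\<forall>j\<in>{j. A n k j}. j < l"
    using fresh_col[OF row_fin] by blast
  have e1: "{j. 1 \<le> j \<and> j < l \<and> A n k j} = {j. A n k j}" using l A_pos by auto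
  have e2: "{i. 1 \<le> i \<and> i < k \<and> A n i l} = {}" using l by auto
  have c1: "card {j. 1 \<le> j \<and> j < l \<and> A n k j} < n+1" unfolding e1 using lt .
  have c2: "card {i. 1 \<le> i \<and> i < k \<and> A n i l} < n+1" unfolding e2 by simp
  have c3: "\<not> (\<exists>i j. 1 \<le> i \<and> i < k \<and> 1 \<le> j \<and> j < l \<and> A n i j \<and> A n i l \<and> A n k j)"
    using l(2) by blast
  have "A n k l" using A_char[OF k l(1), of n] c1 c2 c3 by blast
  then show False using l(3) by auto
qed

lemma colc_fresh: "\<exists>c. c \<ge> 1 \<and> colc k c < n + 1"
proof -
  obtain c where "c \<ge> 1" "\<forall>i<k. \<not> A n i c" using fresh_col[of "{}" k] by auto
  then have "colc k c = 0" unfolding colc_def by auto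
  then show ?thesis using \<open>c \<ge> 1\<close> by auto
qed

lemma ff_props: "1 \<le> ff k" "colc k (ff k) < n + 1"
  using LeastI_ex[OF colc_fresh[of k]] unfolding ff_def by auto

lemma ff_min: "1 \<le> c \<Longrightarrow> c < ff k \<Longrightarrow> colc k c = n + 1"
  using not_less_Least[of c "\<lambda>c. 1 \<le> c \<and> colc k c < n + 1"] colc_le[of k c] unfolding ff_def by auto

lemma A_colc: "A n k c \<Longrightarrow> colc k c < n + 1"
  using A_char[of k c n] A_pos[of k c] unfolding colc_def by auto

lemma A_ge_ff: "A n k c \<Longrightarrow> ff k \<le> c"
proof (rule ccontr)
  assume "A n k c" "\<not> ff k \<le> c"
  then show False using A_colc[of k c] ff_min[of c k] A_pos[of k c] by simp
qed

lemma A_ff: "1 \<le> k \<Longrightarrow> A n k (ff k)"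
proof -
  assume k: "1 \<le> k"
  have e1: "{j. 1 \<le> j \<and> j < ff k \<and> A n k j} = {}" using A_ge_ff by fastforce
  have c1: "card {j. 1 \<le> j \<and> j < ff k \<and> A n k j} < n+1" unfolding e1 by simp
  have c2: "card {i. 1 \<le> i \<and> i < k \<and> A n i (ff k)} < n+1" using ff_props(2)[of k] unfolding colc_def .
  have c3: "\<not> (\<exists>i j. 1 \<le> i \<and> i < k \<and> 1 \<le> j \<and> j < ff k \<and> A n i j \<and> A n i (ff k) \<and> A n k j)"
    using A_ge_ff[of k] by (meson not_le)
  show ?thesis using A_char[OF k ff_props(1), of n] c1 c2 c3 by blast
qed

lemma ff_mono: "k \<le> k' \<Longrightarrow> ff k \<le> ff k'"
  unfolding ff_def
  by (rule Least_le) (metis (mono_tags, lifting) colc_mono ff_def ff_props le_less_trans)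

lemma NC: "A n k l \<Longrightarrow> 1 \<le> c \<Longrightarrow> c < l \<Longrightarrow> \<not> A n k c \<Longrightarrow> colc k c = n + 1 \<or> c \<in> Blk k"
proof -
  assume h: "A n k l" "1 \<le> c" "c < l" "\<not> A n k c"
  have k: "1 \<le> k" using A_pos h(1) by auto
  have "card {j. 1 \<le> j \<and> j < c \<and> A n k j} \<le> card {j. 1 \<le> j \<and> j < l \<and> A n k j}"
    by (rule card_mono) (use h in auto)
  also have "\<dots> < n + 1" using A_char[of k l n] h(1) k A_pos[OF h(1)] by auto
  finally show ?thesis using A_char[OF k h(2), of n] h(4) colc_le[of k c]
    unfolding colc_def Blk_def by auto
qed

lemma Blk_sub: "Blk k \<subseteq> (\<Union>j\<in>{j. A n k j}. \<Union>i\<in>{i. A n i j}. {c. A n i c})"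
  unfolding Blk_def by blast

lemma Blk_card: "finite (Blk k) \<and> card (Blk k) \<le> (n+1)^3"
proof -
  let ?U = "(\<Union>j\<in>{j. A n k j}. \<Union>i\<in>{i. A n i j}. {c. A n i c})"
  have fU: "finite ?U" using row_fin col_fin by auto
  have "card ?U \<le> (\<Sum>j\<in>{j. A n k j}. card (\<Union>i\<in>{i. A n i j}. {c. A n i c}))"
    by (rule card_UN_le[OF row_fin])
  also have "\<dots> \<le> (\<Sum>j\<in>{j. A n k j}. (n+1)*(n+1))"
  proof (rule sum_mono)
    fix j
    have "card (\<Union>i\<in>{i. A n i j}. {c. A n i c}) \<le> (\<Sum>i\<in>{i. A n i j}. card {c. A n i c})"
      by (rule card_UN_le[OF col_fin])
    also have "\<dots> \<le> (\<Sum>i\<in>{i. A n i j}. n+1)" by (rule sum_mono) (rule row_le)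
    also have "\<dots> = card {i. A n i j} * (n+1)" by simp
    also have "\<dots> \<le> (n+1)*(n+1)" using col_le[of j] by (rule mult_le_mono1)
    finally show "card (\<Union>i\<in>{i. A n i j}. {c. A n i c}) \<le> (n+1)*(n+1)" .
  qed
  also have "\<dots> = card {j. A n k j} * ((n+1)*(n+1))" by simp
  also have "\<dots> \<le> (n+1)*((n+1)*(n+1))" by (rule mult_le_mono1[OF row_le])
  also have "\<dots> = (n+1)^3" by (simp add: power3_eq_cube)
  finally show ?thesis using card_mono[OF fU Blk_sub] finite_subset[OF Blk_sub fU] by simp
qed

end

context fixes n :: nat
begin

lemma contig: "A n i c \<Longrightarrow> 1 \<le> c' \<Longrightarrow> c' < c \<Longrightarrow> \<exists>i'. i' \<le> i \<and> A n i' c'"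
proof -
  assume h: "A n i c" "1 \<le> c'" "c' < c"
  show ?thesis
  proof (cases "A n i c'")
    case True then show ?thesis by blast
  next
    case False
    then have "colc n i c' = n + 1 \<or> c' \<in> Blk n i" using NC h by blast
    then show ?thesis
    proof
      assume "colc n i c' = n + 1"
      then have "{i'. 1 \<le> i' \<and> i' < i \<and> A n i' c'} \<noteq> {}" unfolding colc_def by (metis card.empty add_is_0 one_neq_zero)
      then show ?thesis by (auto intro: less_imp_le)
    next
      assume "c' \<in> Blk n i"
      then show ?thesis unfolding Blk_def by (auto intro: less_imp_le)
    qed
  qed
qed

lemma card_filter_sum: "finite I \<Longrightarrow> card {x\<in>I. P x} = (\<Sum>x\<in>I. if P x then 1 else 0)"
  by (simp add: sum.inter_filter[symmetric])

lemma double_count: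
  assumes "finite I" "finite C"
  shows "(\<Sum>i\<in>I. card {c\<in>C. A n i c}) = (\<Sum>c\<in>C. card {i\<in>I. A n i c})"
  using assms by (simp add: card_filter_sum sum.swap[of _ C I])

lemma count_rows:
  assumes "\<And>i c. 1 \<le> i \<Longrightarrow> i < K \<Longrightarrow> A n i c \<Longrightarrow> c < F"
  shows "K - 1 \<le> F - 1"
proof -
  let ?I = "{1..<K}" and ?C = "{1..<F}"
  have "(K - 1) * (n+1) = (\<Sum>i\<in>?I. card {c\<in>?C. A n i c})"
  proof -
    have "\<And>i. i \<in> ?I \<Longrightarrow> {c\<in>?C. A n i c} = {c. A n i c}" using assms A_pos by fastforce
    then have "(\<Sum>i\<in>?I. card {c\<in>?C. A n i c}) = (\<Sum>i\<in>?I. card {c. A n i c})" by simp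
    also have "\<dots> = (\<Sum>i\<in>?I. n + 1)" by (rule sum.cong) (auto simp: row_card)
    finally show ?thesis by simp
  qed
  also have "\<dots> = (\<Sum>c\<in>?C. card {i\<in>?I. A n i c})" by (rule double_count) auto
  also have "\<dots> \<le> (\<Sum>c\<in>?C. n + 1)"
  proof (rule sum_mono)
    fix c have "card {i\<in>?I. A n i c} \<le> card {i. A n i c}" by (rule card_mono[OF col_fin]) auto
    then show "card {i\<in>?I. A n i c} \<le> n + 1" using col_le[of n c] by linarith
  qed
  also have "\<dots> = (F - 1) * (n + 1)" by simp
  finally show ?thesis by (subst (asm) mult_le_cancel2) simp
qed

lemma full_count: "card {c. 1 \<le> c \<and> c < l \<and> colc n k c = n + 1} \<le> k - 1"
proof -
  let ?F = "{c. 1 \<le> c \<and> c < l \<and> colc n k c = n + 1}" and ?I = "{1..<k}"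
  have fF: "finite ?F" by (rule finite_subset[of _ "{..<l}"]) auto
  have "card ?F * (n + 1) = (\<Sum>c\<in>?F. colc n k c)" by simp
  also have "\<dots> = (\<Sum>c\<in>?F. card {i\<in>?I. A n i c})"
    by (rule sum.cong) (auto simp: colc_def intro!: arg_cong[where f=card])
  also have "\<dots> = (\<Sum>i\<in>?I. card {c\<in>?F. A n i c})" by (rule double_count[symmetric]) (auto simp: fF)
  also have "\<dots> \<le> (\<Sum>i\<in>?I. n + 1)"
  proof (rule sum_mono)
    fix i have "card {c\<in>?F. A n i c} \<le> card {c. A n i c}" by (rule card_mono[OF row_fin]) auto
    then show "card {c\<in>?F. A n i c} \<le> n + 1" using row_le[of n i] by linarith
  qed
  also have "\<dots> = (k - 1) * (n + 1)" by simp
  finally show ?thesis by (subst (asm) mult_le_cancel2) simp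
qed

definition "D1 = n + (n+1)^3"
definition "P1 = 1 + (n+1) + (n+1)^3"
definition "D2 = 1 + P1 * (n+1)"

lemma upper_band: "A n k l \<Longrightarrow> l \<le> k + D1"
proof -
  assume h: "A n k l"
  have k: "1 \<le> k" using A_pos h by auto
  define g where "g = ff n k"
  have g1: "1 \<le> g" using ff_props g_def by auto
  have gl: "g \<le> l" using A_ge_ff h g_def by auto
  define F' where "F' = {c. g \<le> c \<and> c < l \<and> colc n k c = n + 1}"
  let ?Fu = "{c. 1 \<le> c \<and> c < l \<and> colc n k c = n + 1}"
  have fFu: "finite ?Fu" by (rule finite_subset[of _ "{..<l}"]) auto
  have sub: "{1..<g} \<union> F' \<subseteq> ?Fu" using ff_min[of _ n k] gl g1 unfolding F'_def g_def by auto
  have disj: "{1..<g} \<inter> F' = {}" unfolding F'_def by auto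
  have fF': "finite F'" unfolding F'_def by (rule finite_subset[of _ "{..<l}"]) auto
  have "card ({1..<g} \<union> F') = (g - 1) + card F'" using card_Un_disjoint[OF _ fF' disj] by simp
  then have c1: "(g - 1) + card F' \<le> k - 1" using card_mono[OF fFu sub] full_count[of l k] by simp
  have sub2: "{g..<l} \<subseteq> {j. A n k j \<and> j < l} \<union> F' \<union> Blk n k"
  proof
    fix c assume c: "c \<in> {g..<l}"
    show "c \<in> {j. A n k j \<and> j < l} \<union> F' \<union> Blk n k"
    proof (cases "A n k c")
      case True then show ?thesis using c by auto
    next
      case False
      then have "colc n k c = n + 1 \<or> c \<in> Blk n k" using NC[OF h, of c] c g1 by auto
      then show ?thesis using c unfolding F'_def by auto
    qed
  qed
  have fr: "finite {j. A n k j \<and> j < l}" by (rule finite_subset[of _ "{..<l}"]) auto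
  have "l - g \<le> card ({j. A n k j \<and> j < l} \<union> F' \<union> Blk n k)"
    using card_mono[OF _ sub2] fr fF' Blk_card[of n k] by simp
  also have "\<dots> \<le> card {j. A n k j \<and> j < l} + card F' + card (Blk n k)"
    by (metis card_Un_le add_le_mono1 order_trans)
  also have "\<dots> \<le> n + card F' + (n+1)^3"
    using row_prefix[OF h] Blk_card[of n k] by simp
  finally show ?thesis using c1 g1 gl k unfolding D1_def by linarith
qed


lemma below_ff: "1 \<le> i \<Longrightarrow> i < k \<Longrightarrow> A n i c \<Longrightarrow> (\<forall>i'. 1 \<le> i' \<and> i' \<le> i \<longrightarrow> \<not> A n i' (ff n k)) \<Longrightarrow> c < ff n k"
proof (rule ccontr)
  assume h: "1 \<le> i" "i < k" "A n i c" "\<forall>i'. 1 \<le> i' \<and> i' \<le> i \<longrightarrow> \<not> A n i' (ff n k)" "\<not> c < ff n k"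
  then have "c \<noteq> ff n k" by auto
  then have "ff n k < c" using h by auto
  then obtain i' where "i' \<le> i" "A n i' (ff n k)" using contig[OF h(3) ff_props(1)] by blast
  then show False using h(4) A_pos by blast
qed

lemma lower_ff: "1 \<le> k \<Longrightarrow> k \<le> ff n k + D2"
proof -
  assume k: "1 \<le> k"
  define g where "g = ff n k"
  have g1: "1 \<le> g" using ff_props g_def by auto
  show ?thesis
  proof (cases "\<exists>i. 1 \<le> i \<and> i < k \<and> A n i g")
    case False
    have "k - 1 \<le> g - 1"
    proof (rule count_rows)
      fix i c assume ic: "1 \<le> i" "i < k" "A n i c"
      have "\<forall>i'. 1 \<le> i' \<and> i' \<le> i \<longrightarrow> \<not> A n i' (ff n k)"
        using False ic(2) unfolding g_def by auto
      then show "c < g" using below_ff[OF ic] unfolding g_def by blast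
    qed
    then show ?thesis using g1 g_def by simp
  next
    case True
    define i0 where "i0 = (LEAST i. 1 \<le> i \<and> i < k \<and> A n i g)"
    have i0: "1 \<le> i0" "i0 < k" "A n i0 g" using LeastI_ex[OF True] unfolding i0_def by auto
    have i0min: "\<not> A n i g" if "1 \<le> i" "i < i0" for i
    proof
      assume "A n i g"
      then have "1 \<le> i \<and> i < k \<and> A n i g" using that i0(2) by auto
      then have "i0 \<le> i" unfolding i0_def by (rule Least_le)
      then show False using that by simp
    qed
    have "i0 - 1 \<le> g - 1"
    proof (rule count_rows)
      fix i c assume ic: "1 \<le> i" "i < i0" "A n i c"
      have ik: "i < k" using ic i0(2) by simp
      have "\<forall>i'. 1 \<le> i' \<and> i' \<le> i \<longrightarrow> \<not> A n i' (ff n k)"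
        using i0min ic(2) unfolding g_def by auto
      then show "c < g" using below_ff[OF ic(1) ik ic(3)] unfolding g_def by blast
    qed
    then have i0g: "i0 \<le> g" using i0 g1 by linarith
    define S where "S = {c. 1 \<le> c \<and> c \<le> g \<and> colc n (Suc i0) c < n + 1}"
    have Ssub: "S \<subseteq> {j. A n i0 j} \<union> Blk n i0 \<union> {g}"
    proof
      fix c assume c: "c \<in> S"
      show "c \<in> {j. A n i0 j} \<union> Blk n i0 \<union> {g}"
      proof (cases "c = g \<or> A n i0 c")
        case True then show ?thesis by auto
      next
        case False
        then have "c < g" "1 \<le> c" using c S_def by auto
        then have "colc n i0 c = n + 1 \<or> c \<in> Blk n i0" using NC[OF i0(3)] False by auto
        moreover have "colc n i0 c \<le> colc n (Suc i0) c" by (rule colc_mono) simp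
        ultimately show ?thesis using c S_def by auto
      qed
    qed
    have fS: "finite S" using row_fin[of n i0] Blk_card[of n i0] finite_subset[OF Ssub] by auto
    have cS: "card S \<le> P1"
    proof -
      have "card S \<le> card ({j. A n i0 j} \<union> Blk n i0 \<union> {g})"
        using card_mono[OF _ Ssub] row_fin[of n i0] Blk_card[of n i0] by simp
      also have "\<dots> \<le> card ({j. A n i0 j} \<union> Blk n i0) + card {g}" by (rule card_Un_le)
      also have "\<dots> \<le> card {j. A n i0 j} + card (Blk n i0) + 1" using card_Un_le[of "{j. A n i0 j}" "Blk n i0"] by simp
      also have "\<dots> \<le> (n+1) + (n+1)^3 + 1" using row_le[of n i0] Blk_card[of n i0] by simp
      finally show ?thesis unfolding P1_def by simp
    qed
    have Rsub: "{Suc i0..<k} \<subseteq> (\<Union>c\<in>S. {i. A n i c})"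
    proof
      fix i assume i: "i \<in> {Suc i0..<k}"
      then have i1: "1 \<le> i" by auto
      have "ff n i \<le> g" using ff_mono[of i k] i g_def by auto
      moreover have "colc n (Suc i0) (ff n i) < n + 1"
        using colc_mono[of "Suc i0" i n "ff n i"] ff_props(2)[of n i] i by auto
      ultimately have "ff n i \<in> S" using ff_props(1) S_def by auto
      then show "i \<in> (\<Union>c\<in>S. {i. A n i c})" using A_ff[OF i1] by auto
    qed
    have "k - Suc i0 \<le> card (\<Union>c\<in>S. {i. A n i c})"
      using card_mono[OF _ Rsub] fS col_fin by simp
    also have "\<dots> \<le> (\<Sum>c\<in>S. card {i. A n i c})" by (rule card_UN_le[OF fS])
    also have "\<dots> \<le> (\<Sum>c\<in>S. n + 1)" by (rule sum_mono) (rule col_le)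
    also have "\<dots> = card S * (n+1)" by simp
    also have "\<dots> \<le> P1 * (n+1)" by (rule mult_le_mono1[OF cS])
    finally have "k - Suc i0 \<le> P1 * (n+1)" .
    then show ?thesis using i0g g_def unfolding D2_def by linarith
  qed
qed

definition "DD = D1 + D2"

lemma band: "A n i j \<Longrightarrow> j \<le> i + DD \<and> i \<le> j + DD"
proof -
  assume h: "A n i j"
  have "j \<le> i + D1" by (rule upper_band[OF h])
  moreover have "i \<le> ff n i + D2" using lower_ff A_pos[OF h] by auto
  moreover have "ff n i \<le> j" using A_ge_ff[OF h] .
  ultimately show ?thesis unfolding DD_def by linarith
qed

end

context fixes n :: nat
begin

lemma DD_pos: "1 \<le> DD n" unfolding DD_def D2_def by simp

definition st :: "nat \<Rightarrow> (nat \<times> nat) set" where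
  "st w = {(a,b). a < 2 * DD n \<and> b < 4 * DD n \<and> A n (w + DD n + a) (w + b)}"

lemma window:
  assumes "st w = st (w + q)" "w + DD n \<le> i" "i < w + 3 * DD n"
  shows "A n (i + q) (j + q) = A n i j"
proof (cases "w \<le> j \<and> j < w + 4 * DD n")
  case True
  define a where "a = i - (w + DD n)"
  define b where "b = j - w"
  have ab: "a < 2 * DD n" "b < 4 * DD n" using assms True unfolding a_def b_def by auto
  have e1: "w + DD n + a = i" "w + b = j" using assms True unfolding a_def b_def by auto
  have e2: "w + q + DD n + a = i + q" "w + q + b = j + q" using e1 by auto
  have "(a,b) \<in> st w \<longleftrightarrow> A n (w + DD n + a) (w + b)" using ab unfolding st_def by auto
  also have "\<dots> \<longleftrightarrow> A n i j" by (subst e1(1), subst e1(2)) (rule refl)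
  finally have 1: "(a,b) \<in> st w \<longleftrightarrow> A n i j" .
  have "(a,b) \<in> st (w + q) \<longleftrightarrow> A n (w + q + DD n + a) (w + q + b)" using ab unfolding st_def by auto
  also have "\<dots> \<longleftrightarrow> A n (i + q) (j + q)" by (subst e2(1), subst e2(2)) (rule refl)
  finally have 2: "(a,b) \<in> st (w + q) \<longleftrightarrow> A n (i + q) (j + q)" .
  show ?thesis using 1 2 assms(1) by simp
next
  case False
  have "\<not> A n i j" using band[of n i j] False assms(2,3) by auto
  moreover have "\<not> A n (i + q) (j + q)" using band[of n "i+q" "j+q"] False assms(2,3) by auto
  ultimately show ?thesis by simp
qed

lemma determinism:
  assumes W: "\<And>i j. L \<le> i \<Longrightarrow> i < L + 2 * DD n \<Longrightarrow> A n (i + q) (j + q) = A n i j"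
    and L: "1 \<le> L"
  shows "L \<le> i \<Longrightarrow> A n (i + q) (j + q) = A n i j"
proof (induction i arbitrary: j rule: less_induct)
  case (less i)
  let ?D = "DD n"
  show ?case
  proof (cases "i < L + 2 * ?D")
    case True then show ?thesis using W less.prems by blast
  next
    case False
    then have iD: "i \<ge> L + 2 * ?D" by simp
    have IHi: "\<And>i' j'. i' < i \<Longrightarrow> L \<le> i' \<Longrightarrow> A n (i' + q) (j' + q) = A n i' j'"
      using less.IH by blast
    show ?thesis
    proof (induction j rule: less_induct)
      case (less j)
      have IHj: "\<And>j'. j' < j \<Longrightarrow> A n (i + q) (j' + q) = A n i j'" using less.IH by blast
      show ?case
      proof (cases "1 \<le> j \<and> j + ?D \<ge> i \<and> j \<le> i + ?D")
        case False
        have "\<not> A n i j" using band[of n i j] A_pos[of n i j] False by auto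
        moreover have "\<not> A n (i + q) (j + q)"
        proof
          assume h: "A n (i + q) (j + q)"
          show False
          proof (cases "j = 0")
            case True then show False using band[OF h] iD L DD_pos[] by auto
          next
            case j0: False
            then show False using band[OF h] False by auto
          qed
        qed
        ultimately show ?thesis by simp
      next
        case True
        have i1: "1 \<le> i" "1 \<le> i + q" using iD L by auto
        have j1: "1 \<le> j" "1 \<le> j + q" using True by auto
        have E1: "{j'. 1 \<le> j' \<and> j' < j + q \<and> A n (i + q) j'} = (\<lambda>x. x + q) ` {j'. 1 \<le> j' \<and> j' < j \<and> A n i j'}"
        proof
          show "{j'. 1 \<le> j' \<and> j' < j + q \<and> A n (i + q) j'} \<subseteq> (\<lambda>x. x + q) ` {j'. 1 \<le> j' \<and> j' < j \<and> A n i j'}"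
          proof
            fix y assume y: "y \<in> {j'. 1 \<le> j' \<and> j' < j + q \<and> A n (i + q) j'}"
            then have "i + q \<le> y + ?D" using band[of n "i+q" y] by auto
            then have yq: "y \<ge> q + 1" using iD L by auto
            define x where "x = y - q"
            have "y = x + q" "1 \<le> x" "x < j" using yq y x_def by auto
            moreover have "A n i x" using IHj[of x] y \<open>y = x + q\<close> \<open>x < j\<close> by auto
            ultimately show "y \<in> (\<lambda>x. x + q) ` {j'. 1 \<le> j' \<and> j' < j \<and> A n i j'}" by auto
          qed
        next
          show "(\<lambda>x. x + q) ` {j'. 1 \<le> j' \<and> j' < j \<and> A n i j'} \<subseteq> {j'. 1 \<le> j' \<and> j' < j + q \<and> A n (i + q) j'}"
            using IHj by auto
        qed
        have E2: "{i'. 1 \<le> i' \<and> i' < i + q \<and> A n i' (j + q)} = (\<lambda>x. x + q) ` {i'. 1 \<le> i' \<and> i' < i \<and> A n i' j}"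
        proof
          show "{i'. 1 \<le> i' \<and> i' < i + q \<and> A n i' (j + q)} \<subseteq> (\<lambda>x. x + q) ` {i'. 1 \<le> i' \<and> i' < i \<and> A n i' j}"
          proof
            fix y assume y: "y \<in> {i'. 1 \<le> i' \<and> i' < i + q \<and> A n i' (j + q)}"
            then have "j + q \<le> y + ?D" using band[of n y "j+q"] by auto
            then have yq: "y \<ge> q + L" using iD True by auto
            define x where "x = y - q"
            have "y = x + q" "L \<le> x" "x < i" using yq y x_def by auto
            moreover have "A n x j" using IHi[of x j] y \<open>y = x + q\<close> \<open>x < i\<close> \<open>L \<le> x\<close> by auto
            ultimately show "y \<in> (\<lambda>x. x + q) ` {i'. 1 \<le> i' \<and> i' < i \<and> A n i' j}" using L by auto
          qed
        next
          show "(\<lambda>x. x + q) ` {i'. 1 \<le> i' \<and> i' < i \<and> A n i' j} \<subseteq> {i'. 1 \<le> i' \<and> i' < i + q \<and> A n i' (j + q)}"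
          proof
            fix y assume "y \<in> (\<lambda>x. x + q) ` {i'. 1 \<le> i' \<and> i' < i \<and> A n i' j}"
            then obtain x where x: "y = x + q" "1 \<le> x" "x < i" "A n x j" by auto
            then have "j \<le> x + ?D" using band[of n x j] by auto
            then have "L \<le> x" using iD True by auto
            then show "y \<in> {i'. 1 \<le> i' \<and> i' < i + q \<and> A n i' (j + q)}" using IHi[of x j] x by auto
          qed
        qed
        have E3: "(\<exists>i' j'. 1 \<le> i' \<and> i' < i + q \<and> 1 \<le> j' \<and> j' < j + q \<and> A n i' j' \<and> A n i' (j + q) \<and> A n (i + q) j')
             \<longleftrightarrow> (\<exists>i' j'. 1 \<le> i' \<and> i' < i \<and> 1 \<le> j' \<and> j' < j \<and> A n i' j' \<and> A n i' j \<and> A n i j')"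
        proof
          assume "\<exists>i' j'. 1 \<le> i' \<and> i' < i + q \<and> 1 \<le> j' \<and> j' < j + q \<and> A n i' j' \<and> A n i' (j + q) \<and> A n (i + q) j'"
          then obtain y z where yz: "1 \<le> y" "y < i + q" "1 \<le> z" "z < j + q" "A n y z" "A n y (j + q)" "A n (i + q) z"
            by blast
          have "j + q \<le> y + ?D" using band[OF yz(6)] by auto
          then have yq: "y \<ge> q + L" using iD True by auto
          have "i + q \<le> z + ?D" using band[OF yz(7)] by auto
          then have zq: "z \<ge> q + 1" using iD L by auto
          define x where "x = y - q"
          define w where "w = z - q"
          have xw: "y = x + q" "z = w + q" "L \<le> x" "x < i" "1 \<le> w" "w < j"
            using yq zq yz unfolding x_def w_def by auto
          have "A n x w" using IHi[of x w] xw yz by auto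
          moreover have "A n x j" using IHi[of x j] xw yz by auto
          moreover have "A n i w" using IHj[of w] xw yz by auto
          ultimately show "\<exists>i' j'. 1 \<le> i' \<and> i' < i \<and> 1 \<le> j' \<and> j' < j \<and> A n i' j' \<and> A n i' j \<and> A n i j'"
            using xw L by (intro exI[of _ x] exI[of _ w]) auto
        next
          assume "\<exists>i' j'. 1 \<le> i' \<and> i' < i \<and> 1 \<le> j' \<and> j' < j \<and> A n i' j' \<and> A n i' j \<and> A n i j'"
          then obtain x w where xw: "1 \<le> x" "x < i" "1 \<le> w" "w < j" "A n x w" "A n x j" "A n i w" by blast
          have "j \<le> x + ?D" using band[OF xw(6)] by auto
          then have xL: "L \<le> x" using iD True by auto
          have "A n (x + q) (w + q)" using IHi[of x w] xw xL by auto
          moreover have "A n (x + q) (j + q)" using IHi[of x j] xw xL by auto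
          moreover have "A n (i + q) (w + q)" using IHj[of w] xw by auto
          ultimately show "\<exists>i' j'. 1 \<le> i' \<and> i' < i + q \<and> 1 \<le> j' \<and> j' < j + q \<and> A n i' j' \<and> A n i' (j + q) \<and> A n (i + q) j'"
            using xw by (intro exI[of _ "x+q"] exI[of _ "w+q"]) auto
        qed
        have C1: "card {j'. 1 \<le> j' \<and> j' < j + q \<and> A n (i + q) j'} = card {j'. 1 \<le> j' \<and> j' < j \<and> A n i j'}"
          unfolding E1 by (rule card_image) (simp add: inj_on_def)
        have C2: "card {i'. 1 \<le> i' \<and> i' < i + q \<and> A n i' (j + q)} = card {i'. 1 \<le> i' \<and> i' < i \<and> A n i' j}"
          unfolding E2 by (rule card_image) (simp add: inj_on_def)
        show ?thesis
          apply (subst A_char[OF i1(2) j1(2)])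
          apply (subst A_char[OF i1(1) j1(1)])
          unfolding C1 C2 E3 by (rule refl)
      qed
    qed
  qed
qed

lemma eventually_periodic: "\<exists>q\<ge>1. \<exists>c. \<forall>i>c. \<forall>j\<ge>1. A n (i + q) (j + q) = A n i j"
proof -
  define g where "g t = st t" for t
  have "range g \<subseteq> Pow ({..<2 * DD n} \<times> {..<4 * DD n})" unfolding g_def st_def by auto
  then have "finite (range g)" by (rule finite_subset) auto
  then have "\<not> inj g" using finite_imageD[of g UNIV] by auto
  then obtain t1 t2 where t: "t1 \<noteq> t2" "g t1 = g t2" unfolding inj_def by auto
  obtain w q where wq: "q \<ge> 1" "st w = st (w + q)"
  proof (cases "t1 < t2")
    case True then show ?thesis using that[of "t2 - t1" t1] t g_def by auto
  next
    case False then show ?thesis using that[of "t1 - t2" t2] t g_def by auto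
  qed
  have W: "\<And>i j. w + DD n \<le> i \<Longrightarrow> i < w + DD n + 2 * DD n \<Longrightarrow> A n (i + q) (j + q) = A n i j"
    using window[OF wq(2)] by auto
  have "\<forall>i>w + DD n. \<forall>j\<ge>1. A n (i + q) (j + q) = A n i j"
    using determinism[OF W] DD_pos by auto
  then show ?thesis using wq(1) by blast
qed

end


lemma period_P: "1 \<le> period n \<and> (\<exists>c. \<forall>i>c. \<forall>j\<ge>1. A n (i + period n) (j + period n) = A n i j)"
  unfolding period_def by (rule LeastI_ex) (rule eventually_periodic)

lemma period_props: "1 \<le> period n" "\<exists>c. \<forall>i>c. \<forall>j\<ge>1. A n (i + period n) (j + period n) = A n i j"
  using period_P[of n] by (rule conjunct1, rule conjunct2)

lemma preperiod_P: "\<forall>i>preperiod n. \<forall>j\<ge>1. A n (i + period n) (j + period n) = A n i j"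
  unfolding preperiod_def by (rule LeastI_ex) (rule period_props(2))

lemma preperiod_props: "i > preperiod n \<Longrightarrow> 1 \<le> j \<Longrightarrow> A n (i + period n) (j + period n) = A n i j"
  using preperiod_P[of n] by blast

lemma shift: "preperiod n < i \<Longrightarrow> 1 \<le> j \<Longrightarrow> A n (i + t * period n) (j + t * period n) = A n i j"
proof (induction t)
  case 0 then show ?case by simp
next
  case (Suc t)
  have "A n (i + Suc t * period n) (j + Suc t * period n) = A n ((i + t * period n) + period n) ((j + t * period n) + period n)"
    by (simp add: algebra_simps)
  also have "\<dots> = A n (i + t * period n) (j + t * period n)"
    by (rule preperiod_props) (use Suc.prems in auto)
  finally show ?case using Suc by simp
qed

lemma row_length_bound: "1 \<le> k \<Longrightarrow> row_length n k \<le> 2 * DD n + 1"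
proof -
  assume k: "1 \<le> k"
  let ?R = "{j. j \<ge> 1 \<and> A n k j}"
  have fR: "finite ?R" by (rule finite_subset[OF _ row_fin[of n k]]) auto
  have ne: "ff n k \<in> ?R" using A_ff[OF k] ff_props(1) by auto
  have ne': "?R \<noteq> {}" using ne by blast
  have "Max ?R \<in> ?R" "Min ?R \<in> ?R" using Max_in[OF fR ne'] Min_in[OF fR ne'] by auto
  then have "Max ?R \<le> k + DD n" "k \<le> Min ?R + DD n" using band[of n k "Max ?R"] band[of n k "Min ?R"] by auto
  then show ?thesis unfolding row_length_def by linarith
qed

lemma row_spread:
  assumes "preperiod n < k" "A n k a" "A n k b"
  shows "a < b + lmax n"
proof -
  let ?R = "{j. j \<ge> 1 \<and> A n k j}"
  have fR: "finite ?R" by (rule finite_subset[OF _ row_fin[of n k]]) auto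
  have "a \<in> ?R" "b \<in> ?R" using assms A_pos by auto
  then have "a \<le> Max ?R" "Min ?R \<le> b" using fR by auto
  then have 1: "a < b + row_length n k" unfolding row_length_def by linarith
  have fin: "finite {row_length n k | k. k > preperiod n}"
    by (rule finite_subset[of _ "{..2 * DD n + 1}"]) (use row_length_bound in auto)
  have "row_length n k \<le> lmax n" unfolding lmax_def by (rule Max_ge[OF fin]) (use assms in auto)
  then show ?thesis using 1 by linarith
qed

lemma rect_free_ord:
  assumes "i < i'" "j < l" "A n i j" "A n i l" "A n i' j" "A n i' l"
  shows False
proof -
  have "1 \<le> i'" "1 \<le> l" "1 \<le> i" "1 \<le> j" using assms A_pos by auto
  then show False using A_char[of i' l n] assms by blast
qed

lemma rect_free:
  assumes "i \<noteq> i'" "j \<noteq> l" "A n i j" "A n i l" "A n i' j" "A n i' l"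
  shows False
proof (cases "i < i'")
  case True show ?thesis
  proof (cases "j < l")
    case True2: True show ?thesis by (rule rect_free_ord[OF True True2 assms(3-6)])
  next
    case False then have "l < j" using assms(2) by simp
    show ?thesis by (rule rect_free_ord[OF True \<open>l < j\<close> assms(4,3,6,5)])
  qed
next
  case False then have ii: "i' < i" using assms by simp
  show ?thesis
  proof (cases "j < l")
    case True2: True show ?thesis by (rule rect_free_ord[OF ii True2 assms(5,6,3,4)])
  next
    case False then have "l < j" using assms(2) by simp
    show ?thesis by (rule rect_free_ord[OF ii \<open>l < j\<close> assms(6,5,4,3)])
  qed
qed

lemma dvd_small: "(d::int) dvd x \<Longrightarrow> \<bar>x\<bar> < d \<Longrightarrow> x = 0"
proof (rule ccontr)
  assume h: "d dvd x" "\<bar>x\<bar> < d" "x \<noteq> 0"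
  have "\<bar>d\<bar> \<le> \<bar>x\<bar>" by (rule dvd_imp_le_int[OF h(3) h(1)])
  then show False using h(2) by linarith
qed

lemma core:
  fixes pb :: nat
  assumes pb: "pb = period n * m" "2 * lmax n \<le> pb"
    and R: "preperiod n < Ra" "preperiod n < Rb" "\<not> int pb dvd (int Ra - int Rb)"
    and A: "A n Ra a1" "A n Ra a2" "A n Rb b1" "A n Rb b2"
    and d: "int pb dvd (int b1 - int a1)" "int pb dvd (int b2 - int a2)" "\<not> int pb dvd (int a1 - int a2)"
    and le: "a1 \<le> b1"
  shows False
proof -
  have "pb dvd (b1 - a1)" using d(1) le by (metis int_dvd_int_iff of_nat_diff)
  then obtain t where t: "b1 - a1 = pb * t" by (auto elim: dvdE)
  define s where "s = t * m"
  have sp: "s * period n = t * pb" unfolding s_def pb by simp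
  have a1: "1 \<le> a1" and a2: "1 \<le> a2" using A A_pos by auto
  have "b1 = a1 + (b1 - a1)" using le by simp
  then have b1: "b1 = a1 + t * pb" using t by (simp add: mult.commute)
  have "A n (Ra + s * period n) (a1 + s * period n)" using shift[OF R(1) a1, of s] A(1) by simp
  then have A1: "A n (Ra + t * pb) b1" unfolding sp b1 .
  have "A n (Ra + s * period n) (a2 + s * period n)" using shift[OF R(1) a2, of s] A(2) by simp
  then have A2: "A n (Ra + t * pb) (a2 + t * pb)" unfolding sp .
  have Rp: "preperiod n < Ra + t * pb" using R by simp
  have s1: "a2 + t * pb < b1 + lmax n" "b1 < a2 + t * pb + lmax n"
    using row_spread[OF Rp A2 A1] row_spread[OF Rp A1 A2] by auto
  have s2: "b2 < b1 + lmax n" "b1 < b2 + lmax n" using row_spread[OF R(2) A(4) A(3)] row_spread[OF R(2) A(3) A(4)] by auto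
  have "int pb dvd (int (a2 + t * pb) - int b2)"
  proof -
    have "int (a2 + t * pb) - int b2 = int pb * int t - (int b2 - int a2)" by simp
    then show ?thesis using d(2) by (metis dvd_diff dvd_triv_left)
  qed
  moreover have "\<bar>int (a2 + t * pb) - int b2\<bar> < int pb" using s1 s2 pb(2) by linarith
  ultimately have "int (a2 + t * pb) - int b2 = 0" by (rule dvd_small)
  then have "int (a2 + t * pb) = int b2" by linarith
  then have eq: "a2 + t * pb = b2" by (simp only: of_nat_eq_iff)
  have neR: "Ra + t * pb \<noteq> Rb"
  proof
    assume h: "Ra + t * pb = Rb"
    have "int Rb = int Ra + int t * int pb" using h[symmetric] by simp
    then have "int Ra - int Rb = int pb * (- int t)" by (simp add: algebra_simps)
    then show False using R(3) by (metis dvd_triv_left)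
  qed
  have neb: "b1 \<noteq> b2"
  proof
    assume "b1 = b2"
    then have "int a1 - int a2 = (int b2 - int a2) - (int b1 - int a1)" by simp
    then show False using d by (metis dvd_diff)
  qed
  show False using rect_free[OF neR neb A1 _ A(3) A(4)] A2 eq by simp
qed

lemma core_sym:
  fixes pb :: nat
  assumes pb: "pb = period n * m" "2 * lmax n \<le> pb"
    and R: "preperiod n < Ra" "preperiod n < Rb" "\<not> int pb dvd (int Ra - int Rb)"
    and A: "A n Ra a1" "A n Ra a2" "A n Rb b1" "A n Rb b2"
    and d: "int pb dvd (int b1 - int a1)" "int pb dvd (int b2 - int a2)" "\<not> int pb dvd (int a1 - int a2)"
  shows False
proof (cases "a1 \<le> b1")
  case True then show ?thesis using core[OF pb R A d] by blast
next
  case False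
  have R3: "\<not> int pb dvd (int Rb - int Ra)" using R(3) by (metis dvd_diff_commute)
  have d1: "int pb dvd (int a1 - int b1)" "int pb dvd (int a2 - int b2)" using d(1,2) by (metis dvd_diff_commute)+
  have d3: "\<not> int pb dvd (int b1 - int b2)"
  proof
    assume "int pb dvd (int b1 - int b2)"
    moreover have "int a1 - int a2 = (int b1 - int b2) - (int b1 - int a1) + (int b2 - int a2)" by simp
    ultimately show False using d by (metis dvd_add dvd_diff)
  qed
  show ?thesis using core[OF pb R(2,1) R3 A(3,4,1,2) d1 d3] False by simp
qed

lemma Bmat_rep:
  assumes "1 \<le> c" "pb \<le> v" "Bmat n pb v x c"
  shows "\<exists>X. A n (v + x) X \<and> int pb dvd (int X - int v - int c)"
proof -
  let ?r = "pb div 2"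
  show ?thesis
  proof (cases "int x - int ?r \<le> int c \<and> int c \<le> int x + int ?r")
    case True
    then have "A n (v + x) (v + c)" using assms(3) unfolding Bmat_def Let_def by simp
    then show ?thesis by (intro exI[of _ "v + c"]) simp
  next
    case F1: False
    show ?thesis
    proof (cases "int c > int x + int ?r")
      case True
      then have "A n (v + x) (nat (int v + int c - int pb))" using assms(3) F1 unfolding Bmat_def Let_def by simp
      moreover have "int (nat (int v + int c - int pb)) - int v - int c = - int pb" using assms(2) by simp
      ultimately show ?thesis by (intro exI[of _ "nat (int v + int c - int pb)"]) simp
    next
      case False
      then have "A n (v + x) (v + c + pb)" using assms(3) F1 unfolding Bmat_def Let_def by simp
      then show ?thesis by (intro exI[of _ "v + c + pb"]) simp
    qed
  qed
qed

theorem theorem4p4: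
  fixes n m v :: nat
  assumes "n \<ge> 1" and "m \<ge> 1"
    and "(period n * m) div 2 > bnd n"
    and "period n * m \<ge> 2 * lmax n"
    and "v \<ge> preperiod n + period n * m"
  shows "\<not> (\<exists>i j k l. 1 \<le> i \<and> i < j \<and> j \<le> period n * m \<and>
                      1 \<le> k \<and> k < l \<and> l \<le> period n * m \<and>
                      Bmat n (period n * m) v i k \<and> Bmat n (period n * m) v i l \<and>
                      Bmat n (period n * m) v j k \<and> Bmat n (period n * m) v j l)"
proof
  assume "\<exists>i j k l. 1 \<le> i \<and> i < j \<and> j \<le> period n * m \<and>
                      1 \<le> k \<and> k < l \<and> l \<le> period n * m \<and>
                      Bmat n (period n * m) v i k \<and> Bmat n (period n * m) v i l \<and>
                      Bmat n (period n * m) v j k \<and> Bmat n (period n * m) v j l"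
  then obtain i j k l where h: "1 \<le> i" "i < j" "j \<le> period n * m" "1 \<le> k" "k < l" "l \<le> period n * m"
    "Bmat n (period n * m) v i k" "Bmat n (period n * m) v i l"
    "Bmat n (period n * m) v j k" "Bmat n (period n * m) v j l" by blast
  define pb where "pb = period n * m"
  have pbv: "pb \<le> v" using assms(5) pb_def by simp
  obtain X1 where X1: "A n (v + i) X1" "int pb dvd (int X1 - int v - int k)"
    using Bmat_rep[OF h(4) pbv] h(7) pb_def by blast
  obtain X2 where X2: "A n (v + i) X2" "int pb dvd (int X2 - int v - int l)"
    using Bmat_rep[of l pb v n i] h(4,5) pbv h(8) pb_def by auto
  obtain Y1 where Y1: "A n (v + j) Y1" "int pb dvd (int Y1 - int v - int k)"
    using Bmat_rep[OF h(4) pbv] h(9) pb_def by blast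
  obtain Y2 where Y2: "A n (v + j) Y2" "int pb dvd (int Y2 - int v - int l)"
    using Bmat_rep[of l pb v n j] h(4,5) pbv h(10) pb_def by auto
  have R: "preperiod n < v + i" "preperiod n < v + j" using h assms(5) by auto
  have R3: "\<not> int pb dvd (int (v + i) - int (v + j))"
  proof
    assume "int pb dvd (int (v + i) - int (v + j))"
    moreover have "\<bar>int (v + i) - int (v + j)\<bar> < int pb"
    proof -
      have "j \<le> pb" using h(3) pb_def by simp
      then have "int j \<le> int pb" by simp
      moreover have "\<bar>int (v + i) - int (v + j)\<bar> = int j - int i" using h(2) by simp
      ultimately show ?thesis using h(1) by linarith
    qed
    ultimately have "int (v + i) - int (v + j) = 0" by (rule dvd_small)
    then show False using h(2) by simp
  qed
  have d1: "int pb dvd (int Y1 - int X1)"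
  proof -
    have "int Y1 - int X1 = (int Y1 - int v - int k) - (int X1 - int v - int k)" by simp
    then show ?thesis using X1(2) Y1(2) by (metis dvd_diff)
  qed
  have d2: "int pb dvd (int Y2 - int X2)"
  proof -
    have "int Y2 - int X2 = (int Y2 - int v - int l) - (int X2 - int v - int l)" by simp
    then show ?thesis using X2(2) Y2(2) by (metis dvd_diff)
  qed
  have d3: "\<not> int pb dvd (int X1 - int X2)"
  proof
    assume a: "int pb dvd (int X1 - int X2)"
    have "int k - int l = (int X1 - int X2) - (int X1 - int v - int k) + (int X2 - int v - int l)" by simp
    then have "int pb dvd (int k - int l)" using a X1(2) X2(2) by (metis dvd_add dvd_diff)
    moreover have "\<bar>int k - int l\<bar> < int pb"
    proof -
      have "l \<le> pb" using h(6) pb_def by simp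
      then have "int l \<le> int pb" by simp
      moreover have "\<bar>int k - int l\<bar> = int l - int k" using h(5) by simp
      ultimately show ?thesis using h(4) by linarith
    qed
    ultimately have "int k - int l = 0" by (rule dvd_small)
    then show False using h(5) by simp
  qed
  show False using core_sym[OF pb_def assms(4)[folded pb_def] R R3 X1(1) X2(1) Y1(1) Y2(1) d1 d2 d3] .
qed


end
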